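(* Let $k\ge 1$ be an integer. A fair coin is flipped independently until $\mathrm{H}^k\mathrm{T}$ ($k$ heads followed by a tails) first appears as consecutive flips; let $Y$ be the number of flips. Then for every $n\ge 1$, \[ E(Y^n) = 2^{k+1} b_n + \sum_{j=1}^{n-1} \binom{n}{j} E(Y^j) \sum_{i=1}^k i^{n-j}\, 2^{k-i}. \]
   Context: $b_n$ denotes the ordered Bell (Fubini) number $b_n=\sum_{i=0}^\infty \frac{i^n}{2^{i+1}}$ (with $0^0=1$), equivalently $b_n=\sum_{i=0}^n e_{n,i}2^{n-i}$ where $e_{n,i}$ are the Eulerian numbers ($e_{0,0}=1$, $e_{n,i}=0$ for $i\le0$ unless $n=i=0$ or for $i>n$, and $e_{n,i}=i e_{n-1,i}+(n-i+1)e_{n-1,i-1}$ otherwise); $b_0,b_1,b_2,\dots=1,1,3,13,75,\dots$. *)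

theory Defs
  imports Complex_Main
begin

fun eulerian :: "nat \<Rightarrow> nat \<Rightarrow> nat" where
  "eulerian 0 i = (if i = 0 then 1 else 0)"
| "eulerian (Suc n) i =
     (if i = 0 \<or> i > Suc n then 0
      else i * eulerian n i + (Suc n - i + 1) * eulerian n (i - 1))"

definition fubini :: "nat \<Rightarrow> nat" where
  "fubini n = (\<Sum>i=0..n. eulerian n i * 2 ^ (n - i))"

text \<open>Coin-flip outcomes are boolean lists, True = heads, False = tails.
  The pattern H^k T ends at (1-based) position j of w: flips j-k, ..., j-1 are
  heads and flip j is tails.\<close>
definition hkt_ends_at :: "nat \<Rightarrow> bool list \<Rightarrow> nat \<Rightarrow> bool" where
  "hkt_ends_at k w j \<longleftrightarrow> k + 1 \<le> j \<and> j \<le> length w \<and> \<not> w ! (j - 1) \<and>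
     (\<forall>i. j - k - 1 \<le> i \<and> i < j - 1 \<longrightarrow> w ! i)"

definition first_hkt :: "nat \<Rightarrow> bool list \<Rightarrow> bool" where
  "first_hkt k w \<longleftrightarrow> hkt_ends_at k w (length w) \<and> (\<forall>j < length w. \<not> hkt_ends_at k w j)"

text \<open>P(Y = m) for a fair coin flipped independently: the fraction of the 2^m
  equally likely outcomes of the first m flips for which H^k T first appears at flip m.\<close>
definition prob_Y :: "nat \<Rightarrow> nat \<Rightarrow> real" where
  "prob_Y k m = real (card {w :: bool list. length w = m \<and> first_hkt k w}) / 2 ^ m"

definition moment_Y :: "nat \<Rightarrow> nat \<Rightarrow> real" where
  "moment_Y k n = (\<Sum>m. real m ^ n * prob_Y k m)"

end

theory Submission
  imports Defs
begin


lemma wnth: "(replicate a True @ False # u) ! i = (if i < a then True else if i = a then False else u ! (i - a - 1))"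
  by (auto simp: nth_append nth_Cons')

lemma hkt_split:
  "hkt_ends_at k (replicate a True @ False # u) j \<longleftrightarrow>
     (j = a + 1 \<and> k \<le> a) \<or> (j > a + 1 \<and> hkt_ends_at k u (j - a - 1))"
proof (cases "j \<le> a")
  case True
  then show ?thesis unfolding hkt_ends_at_def by (auto simp: wnth)
next
  case False
  show ?thesis
  proof (cases "j = a + 1")
    case True
    then show ?thesis unfolding hkt_ends_at_def by (auto simp: wnth)
  next
    case False2: False
    have "j = a + 1 + (j - a - 1)" "j - a - 1 \<ge> 1" using False False2 by auto
    then obtain j' where j: "j = a + 1 + j'" "j' \<ge> 1" by blast
    show ?thesis
    proof (cases "k + 1 \<le> j'")
      case True
      have "(\<forall>i. j - k - 1 \<le> i \<and> i < j - 1 \<longrightarrow> (replicate a True @ False # u) ! i) \<longleftrightarrow>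
            (\<forall>i. j' - k - 1 \<le> i \<and> i < j' - 1 \<longrightarrow> u ! i)"
      proof
        assume H: "\<forall>i. j - k - 1 \<le> i \<and> i < j - 1 \<longrightarrow> (replicate a True @ False # u) ! i"
        show "\<forall>i. j' - k - 1 \<le> i \<and> i < j' - 1 \<longrightarrow> u ! i"
        proof (intro allI impI)
          fix i assume i: "j' - k - 1 \<le> i \<and> i < j' - 1"
          have "j - k - 1 \<le> i + a + 1 \<and> i + a + 1 < j - 1" using i j True by arith
          with H have "(replicate a True @ False # u) ! (i + a + 1)" by blast
          then show "u ! i" by (simp add: wnth)
        qed
      next
        assume H: "\<forall>i. j' - k - 1 \<le> i \<and> i < j' - 1 \<longrightarrow> u ! i"
        show "\<forall>i. j - k - 1 \<le> i \<and> i < j - 1 \<longrightarrow> (replicate a True @ False # u) ! i"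
        proof (intro allI impI)
          fix i assume i: "j - k - 1 \<le> i \<and> i < j - 1"
          have "j' - k - 1 \<le> i - a - 1 \<and> i - a - 1 < j' - 1" "i > a" using i j True by arith+
          with H have "u ! (i - a - 1)" by blast
          then show "(replicate a True @ False # u) ! i" using \<open>i > a\<close> by (simp add: wnth)
        qed
      qed
      with j True show ?thesis unfolding hkt_ends_at_def by (auto simp: wnth)
    next
      case False3: False
      have "\<not> hkt_ends_at k (replicate a True @ False # u) j"
        unfolding hkt_ends_at_def
      proof
        assume "k + 1 \<le> j \<and> j \<le> length (replicate a True @ False # u) \<and>
          \<not> (replicate a True @ False # u) ! (j - 1) \<and>
          (\<forall>i. j - k - 1 \<le> i \<and> i < j - 1 \<longrightarrow> (replicate a True @ False # u) ! i)"
        hence "(replicate a True @ False # u) ! a" using j False3 by auto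
        thus False by (simp add: wnth)
      qed
      with j False3 show ?thesis unfolding hkt_ends_at_def by auto
    qed
  qed
qed

lemma first_split:
  "first_hkt k (replicate a True @ False # u) \<longleftrightarrow> (k \<le> a \<and> u = []) \<or> (a < k \<and> first_hkt k u)"
proof
  assume H: "first_hkt k (replicate a True @ False # u)"
  show "(k \<le> a \<and> u = []) \<or> (a < k \<and> first_hkt k u)"
  proof (cases "u = []")
    case True
    with H show ?thesis unfolding first_hkt_def by (simp add: hkt_split)
  next
    case False
    hence len: "length (replicate a True @ False # u) > a + 1" by simp
    from H have e: "hkt_ends_at k u (length u)" unfolding first_hkt_def using False by (simp add: hkt_split)
    from H len have "\<not> hkt_ends_at k (replicate a True @ False # u) (a+1)" unfolding first_hkt_def by blast
    hence ak: "a < k" by (simp add: hkt_split)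
    have "\<forall>j < length u. \<not> hkt_ends_at k u j"
    proof (intro allI impI)
      fix j assume "j < length u"
      show "\<not> hkt_ends_at k u j"
      proof (cases "j = 0")
        case True thus ?thesis by (simp add: hkt_ends_at_def)
      next
        case False
        from H \<open>j < length u\<close> have "\<not> hkt_ends_at k (replicate a True @ False # u) (a+1+j)"
          unfolding first_hkt_def by simp
        with False show ?thesis by (simp add: hkt_split)
      qed
    qed
    with e ak show ?thesis unfolding first_hkt_def by simp
  qed
next
  assume H: "(k \<le> a \<and> u = []) \<or> (a < k \<and> first_hkt k u)"
  show "first_hkt k (replicate a True @ False # u)"
  proof (cases "k \<le> a \<and> u = []")
    case True
    then show ?thesis unfolding first_hkt_def by (auto simp: hkt_split)
  next
    case False
    with H have ak: "a < k" and f: "first_hkt k u" by auto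
    from f have lu: "length u \<ge> k + 1" by (simp add: first_hkt_def hkt_ends_at_def)
    show ?thesis unfolding first_hkt_def
    proof
      show "hkt_ends_at k (replicate a True @ False # u) (length (replicate a True @ False # u))"
        using f lu using ak by (auto simp add: hkt_split first_hkt_def)
      show "\<forall>j<length (replicate a True @ False # u). \<not> hkt_ends_at k (replicate a True @ False # u) j"
      proof (intro allI impI)
        fix j assume j: "j < length (replicate a True @ False # u)"
        show "\<not> hkt_ends_at k (replicate a True @ False # u) j"
        proof
          assume "hkt_ends_at k (replicate a True @ False # u) j"
          hence "a + 1 < j \<and> hkt_ends_at k u (j - a - 1)" using ak by (auto simp: hkt_split)
          moreover have "j - a - 1 < length u" using j calculation by auto
          ultimately show False using f unfolding first_hkt_def by blast
        qed
      qed
    qed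
  qed
qed

lemma decomp: "False \<in> set w \<Longrightarrow> \<exists>a u. w = replicate a True @ False # u"
proof (induction w)
  case Nil thus ?case by simp
next
  case (Cons x w)
  show ?case
  proof (cases x)
    case True
    with Cons obtain a u where "w = replicate a True @ False # u" by auto
    with True have "x # w = replicate (Suc a) True @ False # u" by simp
    thus ?thesis by blast
  next
    case False
    hence "x # w = replicate 0 True @ False # w" by simp
    thus ?thesis by blast
  qed
qed

lemma decomp_unique: "replicate a True @ False # u = replicate b True @ False # v \<Longrightarrow> a = b \<and> u = v"
proof (induction a arbitrary: b)
  case 0 thus ?case by (cases b) auto
next
  case (Suc a) thus ?case by (cases b) auto
qed

lemma first_has_False: "k \<ge> 1 \<Longrightarrow> first_hkt k w \<Longrightarrow> False \<in> set w"
proof -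
  assume "first_hkt k w"
  hence "length w \<ge> 1" "\<not> w ! (length w - 1)" by (auto simp: first_hkt_def hkt_ends_at_def)
  moreover have "length w - 1 < length w" using calculation by simp
  ultimately show "False \<in> set w" by (metis (full_types) nth_mem)
qed


lemma fin_len: "finite {w :: bool list. length w = m \<and> P w}"
  by (rule finite_subset[OF _ finite_list_length[of m]]) auto

lemma count_rec:
  assumes k: "k \<ge> 1"
  shows "card {w. length w = m \<and> first_hkt k w} =
    (if k + 1 \<le> m then 1 else 0) + (\<Sum>a<k. if a < m then card {w. length w = m - Suc a \<and> first_hkt k w} else 0)"
proof -
  define U where "U a = {u :: bool list. length u = m - Suc a \<and> ((k \<le> a \<and> u = []) \<or> (a < k \<and> first_hkt k u))}" for a
  define T where "T a = (\<lambda>u. replicate a True @ False # u) ` U a" for a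
  have eq: "{w. length w = m \<and> first_hkt k w} = (\<Union>a\<in>{..<m}. T a)"
  proof
    show "{w. length w = m \<and> first_hkt k w} \<subseteq> (\<Union>a\<in>{..<m}. T a)"
    proof
      fix w assume w: "w \<in> {w. length w = m \<and> first_hkt k w}"
      hence "False \<in> set w" using first_has_False[OF k] by auto
      then obtain a u where wa: "w = replicate a True @ False # u" using decomp by blast
      with w have "a < m" "length u = m - Suc a" "(k \<le> a \<and> u = []) \<or> (a < k \<and> first_hkt k u)"
        using first_split by auto
      hence "u \<in> U a" unfolding U_def by auto
      with wa \<open>a < m\<close> show "w \<in> (\<Union>a\<in>{..<m}. T a)" unfolding T_def by blast
    qed
  next
    show "(\<Union>a\<in>{..<m}. T a) \<subseteq> {w. length w = m \<and> first_hkt k w}"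
      unfolding T_def U_def using first_split by auto
  qed
  have finU: "finite (U a)" for a unfolding U_def by (rule fin_len)
  have cardT: "card (T a) = card (U a)" for a
    unfolding T_def by (rule card_image) (auto simp: inj_on_def dest: decomp_unique)
  have "card (\<Union>a\<in>{..<m}. T a) = (\<Sum>a<m. card (T a))"
  proof (rule card_UN_disjoint)
    show "finite {..<m}" by simp
    show "\<forall>i\<in>{..<m}. finite (T i)" unfolding T_def using finU by blast
    show "\<forall>i\<in>{..<m}. \<forall>j\<in>{..<m}. i \<noteq> j \<longrightarrow> T i \<inter> T j = {}"
      unfolding T_def by (auto dest: decomp_unique)
  qed
  also have "\<dots> = (\<Sum>a<m. (if a = m - 1 then (if k \<le> a then 1 else 0) else 0) +
                          (if a < k then card {w. length w = m - Suc a \<and> first_hkt k w} else 0))"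
  proof (rule sum.cong[OF refl])
    fix a assume a: "a \<in> {..<m}"
    show "card (T a) = (if a = m - 1 then (if k \<le> a then 1 else 0) else 0) +
                          (if a < k then card {w. length w = m - Suc a \<and> first_hkt k w} else 0)"
    proof (cases "k \<le> a")
      case True
      hence "U a = (if m - Suc a = 0 then {[]} else {})" unfolding U_def by auto
      moreover have "(m - Suc a = 0) = (a = m - 1)" using a by auto
      ultimately show ?thesis using True cardT by auto
    next
      case False
      hence "U a = {w. length w = m - Suc a \<and> first_hkt k w}" unfolding U_def by auto
      then show ?thesis using False cardT by auto
    qed
  qed
  also have "\<dots> = (\<Sum>a<m. (if a = m - 1 then (if k \<le> a then 1 else 0) else 0)) +
                  (\<Sum>a<m. if a < k then card {w. length w = m - Suc a \<and> first_hkt k w} else 0)"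
    by (rule sum.distrib)
  also have "(\<Sum>a<m. (if a = m - 1 then (if k \<le> a then 1 else 0) else 0)) = (if k + 1 \<le> m then 1 else 0)"
    by (subst sum.delta) auto
  also have "(\<Sum>a<m. if a < k then card {w. length w = m - Suc a \<and> first_hkt k w} else 0) =
             (\<Sum>a\<in>{..<m} \<inter> {..<k}. card {w. length w = m - Suc a \<and> first_hkt k w})"
    by (subst sum.inter_restrict) auto
  also have "\<dots> = (\<Sum>a\<in>{..<k} \<inter> {..<m}. card {w. length w = m - Suc a \<and> first_hkt k w})"
    by (simp add: Int_commute)
  also have "\<dots> = (\<Sum>a<k. if a < m then card {w. length w = m - Suc a \<and> first_hkt k w} else 0)"
    by (subst sum.inter_restrict) auto
  finally show ?thesis using eq by simp
qed

lemma prob_rec: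
  assumes k: "k \<ge> 1"
  shows "prob_Y k m = (if k + 1 \<le> m then 1 / 2 ^ m else 0) +
           (\<Sum>i\<in>{1..k}. (1 / 2 ^ i) * (if i \<le> m then prob_Y k (m - i) else 0))"
proof -
  let ?c = "\<lambda>m. real (card {w. length w = m \<and> first_hkt k w})"
  have "prob_Y k m = ?c m / 2 ^ m" unfolding prob_Y_def by simp
  also have "?c m = (if k + 1 \<le> m then 1 else 0) + (\<Sum>a<k. if a < m then ?c (m - Suc a) else 0)"
    by (subst count_rec[OF k]) (simp add: of_nat_sum if_distrib cong: if_cong)
  also have "\<dots> / 2 ^ m = (if k + 1 \<le> m then 1 / 2 ^ m else 0) + (\<Sum>a<k. (if a < m then ?c (m - Suc a) else 0) / 2 ^ m)"
    by (simp add: add_divide_distrib sum_divide_distrib)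
  also have "(\<Sum>a<k. (if a < m then ?c (m - Suc a) else 0) / 2 ^ m) =
             (\<Sum>a<k. (1 / 2 ^ Suc a) * (if Suc a \<le> m then prob_Y k (m - Suc a) else 0))"
  proof (rule sum.cong[OF refl])
    fix a
    show "(if a < m then ?c (m - Suc a) else 0) / 2 ^ m =
          (1 / 2 ^ Suc a) * (if Suc a \<le> m then prob_Y k (m - Suc a) else 0)"
    proof (cases "a < m")
      case True
      hence "m = Suc a + (m - Suc a)" by simp
      hence "(2::real) ^ m = 2 ^ Suc a * 2 ^ (m - Suc a)" by (metis power_add)
      thus ?thesis using True unfolding prob_Y_def by simp
    qed simp
  qed
  also have "\<dots> = (\<Sum>i\<in>{1..k}. (1 / 2 ^ i) * (if i \<le> m then prob_Y k (m - i) else 0))"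
    by (simp add: sum.atLeast1_atMost_eq)
  finally show ?thesis .
qed

lemma prob_nonneg: "prob_Y k m \<ge> 0" unfolding prob_Y_def by simp



lemma shift_sum_eq: "(\<Sum>m<(N::nat). if i \<le> m then g (m - i) else 0) = (\<Sum>m<N - i. (g m :: real))"
proof (induction N)
  case 0 thus ?case by simp
next
  case (Suc N)
  show ?case
  proof (cases "i \<le> N")
    case True
    hence "Suc N - i = Suc (N - i)" by simp
    with Suc True show ?thesis by simp
  next
    case False
    hence "Suc N - i = N - i" by simp
    with Suc False show ?thesis by simp
  qed
qed

lemma binexp: "(real m + real i) ^ n * (x::real) = (\<Sum>j\<le>n. real (n choose j) * real i ^ (n - j) * (real m ^ j * x))"
  unfolding binomial_ring[of "real m" "real i" n] by (simp add: sum_distrib_right sum_distrib_left mult_ac)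

lemma mom_summable:
  fixes p e w :: "nat \<Rightarrow> real" and I :: "nat set"
  assumes fin: "finite I" and p0: "\<And>m. p m \<ge> 0" and e0: "\<And>m. e m \<ge> 0"
    and w0: "\<And>i. i \<in> I \<Longrightarrow> w i \<ge> 0"
    and Wl: "(\<Sum>i\<in>I. w i) < 1" and es: "\<And>n. summable (\<lambda>m. real m ^ n * e m)"
    and rec: "\<And>m. p m = e m + (\<Sum>i\<in>I. w i * (if i \<le> m then p (m - i) else 0))"
  shows "summable (\<lambda>m. real m ^ n * p m)"
proof (induction n rule: less_induct)
  case (less n)
  define M where "M j = (\<Sum>m. real m ^ j * p m)" for j
  define R where "R i = (\<Sum>j<n. real (n choose j) * real i ^ (n - j) * M j)" for i
  define E where "E = (\<Sum>m. real m ^ n * e m)"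
  define W where "W = (\<Sum>i\<in>I. w i)"
  define B where "B = (E + (\<Sum>i\<in>I. w i * R i)) / (1 - W)"
  show ?case
  proof (rule summableI_nonneg_bounded)
    fix m show "0 \<le> real m ^ n * p m" using p0 by simp
  next
    fix N
    let ?F = "\<lambda>j. \<Sum>m<N. real m ^ j * p m"
    have Fj: "?F j \<le> M j" if "j < n" for j
      unfolding M_def by (rule sum_le_suminf[OF less.IH[OF that]]) (auto simp: p0)
    have key: "(\<Sum>m<N. real m ^ n * (if i \<le> m then p (m - i) else 0)) \<le> ?F n + R i" for i
    proof -
      have "(\<Sum>m<N. real m ^ n * (if i \<le> m then p (m - i) else 0)) =
            (\<Sum>m<N. if i \<le> m then real (m - i + i) ^ n * p (m - i) else 0)"
        by (rule sum.cong) auto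
      also have "\<dots> = (\<Sum>m<N - i. real (m + i) ^ n * p m)" by (rule shift_sum_eq)
      also have "\<dots> \<le> (\<Sum>m<N. real (m + i) ^ n * p m)"
        by (rule sum_mono2) (auto simp: p0)
      also have "\<dots> = (\<Sum>m<N. \<Sum>j\<le>n. real (n choose j) * real i ^ (n - j) * (real m ^ j * p m))"
        by (simp add: binexp)
      also have "\<dots> = (\<Sum>j\<le>n. real (n choose j) * real i ^ (n - j) * ?F j)"
        by (subst sum.swap) (simp add: sum_distrib_left)
      also have "\<dots> = ?F n + (\<Sum>j<n. real (n choose j) * real i ^ (n - j) * ?F j)"
        by (simp add: lessThan_Suc_atMost[symmetric])
      also have "\<dots> \<le> ?F n + R i" unfolding R_def
        by (intro add_left_mono sum_mono mult_left_mono Fj) auto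
      finally show ?thesis .
    qed
    have pt: "real m ^ n * p m = real m ^ n * e m + (\<Sum>i\<in>I. w i * (real m ^ n * (if i \<le> m then p (m - i) else 0)))" for m
      by (subst rec) (simp add: sum_distrib_left algebra_simps)
    have "?F n = (\<Sum>m<N. real m ^ n * e m) + (\<Sum>i\<in>I. w i * (\<Sum>m<N. real m ^ n * (if i \<le> m then p (m - i) else 0)))"
      by (simp only: pt sum.distrib) (simp add: sum_distrib_left sum.swap[of _ I])
    also have "(\<Sum>m<N. real m ^ n * e m) \<le> E"
      unfolding E_def by (rule sum_le_suminf[OF es]) (auto simp: e0)
    also have "(\<Sum>i\<in>I. w i * (\<Sum>m<N. real m ^ n * (if i \<le> m then p (m - i) else 0))) \<le> (\<Sum>i\<in>I. w i * (?F n + R i))"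
      by (intro sum_mono mult_left_mono key w0)
    also have "(\<Sum>i\<in>I. w i * (?F n + R i)) = W * ?F n + (\<Sum>i\<in>I. w i * R i)"
      unfolding W_def by (simp add: algebra_simps sum.distrib sum_distrib_right)
    finally have "?F n \<le> E + (W * ?F n + (\<Sum>i\<in>I. w i * R i))" by simp
    hence "(1 - W) * ?F n \<le> E + (\<Sum>i\<in>I. w i * R i)" by (simp add: algebra_simps)
    moreover have "1 - W > 0" using Wl unfolding W_def by simp
    ultimately show "?F n \<le> B" unfolding B_def by (simp add: pos_le_divide_eq mult.commute)
  qed
qed

lemma mom_shift_sums:
  fixes p :: "nat \<Rightarrow> real"
  assumes "\<And>j. summable (\<lambda>m. real m ^ j * p m)"
  shows "(\<lambda>m. real m ^ n * (if i \<le> m then p (m - i) else 0)) sums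
           (\<Sum>j\<le>n. real (n choose j) * real i ^ (n - j) * (\<Sum>m. real m ^ j * p m))"
proof -
  let ?f = "\<lambda>m. real m ^ n * (if i \<le> m then p (m - i) else 0)"
  let ?S = "(\<Sum>j\<le>n. real (n choose j) * real i ^ (n - j) * (\<Sum>m. real m ^ j * p m))"
  have eq: "(\<lambda>m. ?f (m + i)) = (\<lambda>m. \<Sum>j\<le>n. real (n choose j) * real i ^ (n - j) * (real m ^ j * p m))"
    by (rule ext) (simp add: binexp)
  have "(\<lambda>m. \<Sum>j\<le>n. real (n choose j) * real i ^ (n - j) * (real m ^ j * p m)) sums ?S"
    by (intro sums_sum sums_mult summable_sums assms)
  hence "(\<lambda>m. ?f (m + i)) sums ?S" by (simp only: eq)
  hence "?f sums (?S + (\<Sum>m<i. ?f m))" by (rule sums_iff_shift[THEN iffD1])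
  moreover have "(\<Sum>m<i. ?f m) = 0" by (rule sum.neutral) auto
  ultimately show ?thesis by simp
qed

lemma mom_identity:
  fixes p e w :: "nat \<Rightarrow> real" and I :: "nat set"
  assumes fin: "finite I" and p0: "\<And>m. p m \<ge> 0" and e0: "\<And>m. e m \<ge> 0"
    and w0: "\<And>i. i \<in> I \<Longrightarrow> w i \<ge> 0"
    and Wl: "(\<Sum>i\<in>I. w i) < 1" and es: "\<And>n. summable (\<lambda>m. real m ^ n * e m)"
    and rec: "\<And>m. p m = e m + (\<Sum>i\<in>I. w i * (if i \<le> m then p (m - i) else 0))"
  shows "(\<Sum>m. real m ^ n * p m) = (\<Sum>m. real m ^ n * e m) +
           (\<Sum>i\<in>I. w i * (\<Sum>j\<le>n. real (n choose j) * real i ^ (n - j) * (\<Sum>m. real m ^ j * p m)))"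
proof -
  have sm: "\<And>j. summable (\<lambda>m. real m ^ j * p m)"
    by (rule mom_summable[OF assms])
  have pt: "(\<lambda>m. real m ^ n * p m) = (\<lambda>m. real m ^ n * e m + (\<Sum>i\<in>I. w i * (real m ^ n * (if i \<le> m then p (m - i) else 0))))"
    by (rule ext, subst rec) (simp add: sum_distrib_left algebra_simps)
  have "(\<lambda>m. real m ^ n * e m + (\<Sum>i\<in>I. w i * (real m ^ n * (if i \<le> m then p (m - i) else 0)))) sums
        ((\<Sum>m. real m ^ n * e m) + (\<Sum>i\<in>I. w i * (\<Sum>j\<le>n. real (n choose j) * real i ^ (n - j) * (\<Sum>m. real m ^ j * p m))))"
    by (intro sums_add summable_sums es sums_sum sums_mult mom_shift_sums sm)
  thus ?thesis by (simp only: pt sums_unique[symmetric])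
qed



lemma geo_summable: "summable (\<lambda>m. real m ^ n * (1/2::real) ^ m)"
proof -
  let ?e = "\<lambda>m::nat. if m = 0 then (1::real) else 0"
  have es: "summable (\<lambda>m. real m ^ n * ?e m)" for n
  proof -
    have "(\<lambda>m. real m ^ n * ?e m) = (\<lambda>m. if m = 0 then real m ^ n else 0)" by auto
    moreover have "summable (\<lambda>m. if m = 0 then real m ^ n else 0)"
      using sums_single[of 0 "\<lambda>m. real m ^ n"] by (rule sums_summable)
    ultimately show ?thesis by simp
  qed
  have rec: "(1/2::real) ^ m = ?e m + (\<Sum>i\<in>{1::nat}. (1/2) * (if i \<le> m then (1/2) ^ (m - i) else 0))" for m
    by (cases m) auto
  show ?thesis
    by (rule mom_summable[of "{1}" "\<lambda>m. (1/2::real)^m" ?e "\<lambda>_. 1/2", OF _ _ _ _ _ es rec]) auto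
qed

lemma eul_zero: "n < i \<Longrightarrow> eulerian n i = 0"
  by (cases n) auto

lemma key_binom:
  assumes "i \<le> n"
  shows "real i * real (Suc (x + n - i) choose Suc n) + real (n + 1 - i) * real ((x + n - i) choose Suc n)
         = real x * real ((x + n - i) choose n)"
proof -
  define y where "y = x + n - i"
  define C where "C = real (y choose n)"
  define D where "D = real (Suc y choose Suc n)"
  define D' where "D' = real (y choose Suc n)"
  have h1: "real (Suc n) * D = real (Suc y) * C"
    unfolding C_def D_def using Suc_times_binomial_eq[of y n]
    by (metis mult.commute of_nat_mult)
  have h2: "D = C + D'" unfolding C_def D_def D'_def by simp
  have h3: "real (Suc n) * D' = (real y - real n) * C" using h1 h2 by (simp add: algebra_simps)
  have yx: "real y = real x + real n - real i" unfolding y_def using assms by simp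
  have ni: "real (n + 1 - i) = real n + 1 - real i" using assms by simp
  have "real (Suc n) * (real i * D + real (n + 1 - i) * D') =
        real i * (real (Suc n) * D) + real (n + 1 - i) * (real (Suc n) * D')"
    by (simp add: algebra_simps)
  also have "\<dots> = real i * (real (Suc y) * C) + (real n + 1 - real i) * ((real y - real n) * C)"
    by (simp only: h1 h3 ni)
  also have "\<dots> = real (Suc n) * (real x * C)"
    by (simp add: yx algebra_simps)
  finally have "real (Suc n) * (real i * D + real (n + 1 - i) * D') = real (Suc n) * (real x * C)" .
  hence "real i * D + real (n + 1 - i) * D' = real x * C" by simp
  thus ?thesis unfolding C_def D_def D'_def y_def .
qed

lemma worp: "real x ^ n = (\<Sum>i\<le>n. real (eulerian n i) * real ((x + n - i) choose n))"
proof (induction n)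
  case 0 thus ?case by simp
next
  case (Suc n)
  let ?E = "\<lambda>i. real (eulerian n i)"
  have "(\<Sum>i\<le>Suc n. real (eulerian (Suc n) i) * real ((x + Suc n - i) choose Suc n)) =
        (\<Sum>i\<le>Suc n. real i * ?E i * real ((x + Suc n - i) choose Suc n)) +
        (\<Sum>i\<le>Suc n. if i = 0 then 0 else real (Suc n - i + 1) * ?E (i - 1) * real ((x + Suc n - i) choose Suc n))"
  proof (subst sum.distrib[symmetric], rule sum.cong[OF refl])
    fix i assume i: "i \<in> {..Suc n}"
    let ?C = "real ((x + Suc n - i) choose Suc n)"
    show "real (eulerian (Suc n) i) * ?C = real i * ?E i * ?C +
          (if i = 0 then 0 else real (Suc n - i + 1) * ?E (i - 1) * ?C)"
    proof (cases "i = 0")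
      case True thus ?thesis by simp
    next
      case False
      hence "eulerian (Suc n) i = i * eulerian n i + (Suc n - i + 1) * eulerian n (i - 1)" using i by simp
      hence "real (eulerian (Suc n) i) = real i * ?E i + real (Suc n - i + 1) * ?E (i - 1)"
        by (metis of_nat_add of_nat_mult)
      thus ?thesis using False by (simp only: distrib_right if_False)
    qed
  qed
  also have "(\<Sum>i\<le>Suc n. real i * ?E i * real ((x + Suc n - i) choose Suc n)) =
             (\<Sum>i\<le>n. real i * ?E i * real (Suc (x + n - i) choose Suc n))"
    by (simp add: eul_zero Suc_diff_le)
  also have "(\<Sum>i\<le>Suc n. if i = 0 then 0 else real (Suc n - i + 1) * ?E (i - 1) * real ((x + Suc n - i) choose Suc n)) =
             (\<Sum>i\<le>n. real (n + 1 - i) * ?E i * real ((x + n - i) choose Suc n))"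
    by (subst sum.atMost_Suc_shift) (simp add: add_diff_eq)
  also have "(\<Sum>i\<le>n. real i * ?E i * real (Suc (x + n - i) choose Suc n)) +
             (\<Sum>i\<le>n. real (n + 1 - i) * ?E i * real ((x + n - i) choose Suc n)) =
             (\<Sum>i\<le>n. ?E i * (real i * real (Suc (x + n - i) choose Suc n) + real (n + 1 - i) * real ((x + n - i) choose Suc n)))"
    by (simp add: sum.distrib[symmetric] algebra_simps add_diff_eq)
  also have "\<dots> = (\<Sum>i\<le>n. ?E i * (real x * real ((x + n - i) choose n)))"
  proof (rule sum.cong[OF refl])
    fix i assume "i \<in> {..n}"
    hence "i \<le> n" by simp
    show "?E i * (real i * real (Suc (x + n - i) choose Suc n) + real (n + 1 - i) * real ((x + n - i) choose Suc n)) =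
          ?E i * (real x * real ((x + n - i) choose n))"
      by (simp only: key_binom[OF \<open>i \<le> n\<close>])
  qed
  also have "\<dots> = real x * real x ^ n" by (simp add: Suc sum_distrib_left algebra_simps)
  finally show ?case by simp
qed

lemma G_sums: "(\<lambda>y. real (y choose n) / 2 ^ y) sums 2"
proof -
  have summ: "summable (\<lambda>y. real (y choose n) / 2 ^ y)" for n
  proof (rule summable_comparison_test'[OF geo_summable[of n]])
    fix y :: nat
    have "real (y choose n) \<le> real y ^ n"
    proof (cases "n \<le> y")
      case True thus ?thesis using binomial_le_pow[OF True] by (metis of_nat_le_iff of_nat_power)
    next
      case False thus ?thesis by (simp add: binomial_eq_0)
    qed
    thus "norm (real (y choose n) / 2 ^ y) \<le> real y ^ n * (1/2) ^ y"
      by (simp add: power_divide divide_right_mono)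
  qed
  have "(\<Sum>y. real (y choose n) / 2 ^ y) = 2"
  proof (induction n)
    case 0
    have "(\<lambda>y. (1/2::real) ^ y) sums (1 / (1 - 1/2))" by (rule geometric_sums) simp
    thus ?case by (simp add: sums_iff power_divide)
  next
    case (Suc n)
    let ?f = "\<lambda>y. real (y choose Suc n) / 2 ^ y"
    let ?g = "\<lambda>y. real (y choose n) / 2 ^ y"
    have "(\<Sum>y. ?f (Suc y)) = suminf ?f - ?f 0" by (rule suminf_split_head[OF summ])
    also have "?f 0 = 0" by simp
    finally have a: "(\<Sum>y. ?f (Suc y)) = suminf ?f" by simp
    have "(\<lambda>y. ?f (Suc y)) = (\<lambda>y. (1/2) * (?g y + ?f y))" by (rule ext) (simp add: add_divide_distrib)
    moreover have "(\<lambda>y. (1/2) * (?g y + ?f y)) sums ((1/2) * (suminf ?g + suminf ?f))"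
      by (intro sums_mult sums_add summable_sums summ)
    ultimately have "(\<lambda>y. ?f (Suc y)) sums ((1/2) * (suminf ?g + suminf ?f))" by simp
    hence "(\<Sum>y. ?f (Suc y)) = (1/2) * (suminf ?g + suminf ?f)" by (rule sums_unique[symmetric])
    with a Suc show ?case by simp
  qed
  thus ?thesis using summ[of n] by (simp add: sums_iff)
qed

lemma G_shift_sums:
  assumes "m \<le> n"
  shows "(\<lambda>x. real ((x + m) choose n) / 2 ^ (x + 1)) sums (2 ^ m)"
proof -
  let ?f = "\<lambda>y. real (y choose n) / 2 ^ y"
  have "(\<Sum>x<m. ?f x) = 0" using assms by (intro sum.neutral) auto
  hence "?f sums (2 + (\<Sum>x<m. ?f x))" using G_sums by simp
  hence "(\<lambda>x. ?f (x + m)) sums 2" by (rule sums_iff_shift[THEN iffD2])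
  hence "(\<lambda>x. (2 ^ m / 2) * ?f (x + m)) sums ((2 ^ m / 2) * 2)" by (rule sums_mult)
  moreover have "(\<lambda>x. (2 ^ m / 2) * ?f (x + m)) = (\<lambda>x. real ((x + m) choose n) / 2 ^ (x + 1))"
    by (rule ext) (simp add: power_add)
  ultimately show ?thesis by simp
qed

lemma fubini_sums: "(\<lambda>x. real x ^ n / 2 ^ (x + 1)) sums real (fubini n)"
proof -
  have eq: "(\<lambda>x. real x ^ n / 2 ^ (x + 1)) =
            (\<lambda>x. \<Sum>i\<le>n. real (eulerian n i) * (real ((x + (n - i)) choose n) / 2 ^ (x + 1)))"
    by (rule ext, subst worp) (simp add: sum_divide_distrib)
  have "(\<lambda>x. \<Sum>i\<le>n. real (eulerian n i) * (real ((x + (n - i)) choose n) / 2 ^ (x + 1))) sums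
        (\<Sum>i\<le>n. real (eulerian n i) * 2 ^ (n - i))"
    by (intro sums_sum sums_mult G_shift_sums) auto
  moreover have "(\<Sum>i\<le>n. real (eulerian n i) * 2 ^ (n - i)) = real (fubini n)"
    unfolding fubini_def by (simp add: atLeast0AtMost)
  ultimately show ?thesis by (simp only: eq)
qed



lemma geo_fin: "(\<Sum>i\<in>{1..k}. 1 / 2 ^ i :: real) = 1 - 1 / 2 ^ k"
  by (induction k) (auto simp: field_simps)

lemma geo_fin': "(\<Sum>i\<in>{Suc 0..k}. 1 / 2 ^ i :: real) = 1 - 1 / 2 ^ k"
  using geo_fin by simp

lemma geo_fin_c: "(\<Sum>i\<in>{1..k}. c / 2 ^ i :: real) = (1 - 1 / 2 ^ k) * c"
proof -
  have "(\<Sum>i\<in>{1..k}. c / 2 ^ i :: real) = c * (\<Sum>i\<in>{1..k}. 1 / 2 ^ i)"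
    by (simp add: sum_distrib_left)
  thus ?thesis by (simp only: geo_fin mult.commute)
qed

lemma geo_fin_c': "(\<Sum>i\<in>{Suc 0..k}. c / 2 ^ i :: real) = (1 - 1 / 2 ^ k) * c"
  using geo_fin_c by simp

lemma sum_split_ends:
  assumes "(n::nat) \<ge> 1"
  shows "(\<Sum>j\<le>n. f j) = f 0 + (\<Sum>j=1..n-1. f j) + (f n :: real)"
proof -
  obtain n' where n: "n = Suc n'" using assms by (cases n) auto
  have "(\<Sum>j\<le>n. f j) = (\<Sum>j\<le>n'. f j) + f n" by (simp add: n)
  also have "(\<Sum>j\<le>n'. f j) = f 0 + (\<Sum>j<n'. f (Suc j))" by (rule sum.atMost_shift)
  also have "(\<Sum>j<n'. f (Suc j)) = (\<Sum>j=1..n-1. f j)" by (simp add: n sum.atLeast1_atMost_eq)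
  finally show ?thesis .
qed

theorem corollary3p6:
  fixes k n :: nat
  assumes "k \<ge> 1" and "n \<ge> 1"
  shows "moment_Y k n =
           2 ^ (k + 1) * real (fubini n)
           + (\<Sum>j = 1..n - 1. real (n choose j) * moment_Y k j *
                (\<Sum>i = 1..k. real i ^ (n - j) * 2 ^ (k - i)))"
proof -
  let ?p = "prob_Y k"
  define e where "e m = (if k + 1 \<le> m then 1 / 2 ^ m else (0::real))" for m
  let ?w = "\<lambda>i::nat. 1 / 2 ^ i :: real"
  let ?I = "{1..k}"
  let ?M = "moment_Y k"
  have es: "summable (\<lambda>m. real m ^ n * e m)" for n
  proof (rule summable_comparison_test'[OF geo_summable[of n]])
    fix m :: nat
    show "norm (real m ^ n * e m) \<le> real m ^ n * (1/2) ^ m"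
      unfolding e_def by (simp add: power_divide)
  qed
  have e0: "e m \<ge> 0" for m unfolding e_def by simp
  have Wl: "(\<Sum>i\<in>?I. ?w i) < 1" by (simp only: geo_fin geo_fin' geo_fin_c geo_fin_c') simp
  have rec: "?p m = e m + (\<Sum>i\<in>?I. ?w i * (if i \<le> m then ?p (m - i) else 0))" for m
    unfolding e_def by (rule prob_rec[OF assms(1)])
  have ident: "?M n = (\<Sum>m. real m ^ n * e m) +
           (\<Sum>i\<in>?I. ?w i * (\<Sum>j\<le>n. real (n choose j) * real i ^ (n - j) * ?M j))" for n
    unfolding moment_Y_def
    by (rule mom_identity[OF _ prob_nonneg e0 _ Wl es rec]) auto
  have geo2: "(\<Sum>m. real m ^ n * (1/2::real) ^ m) = 2 * real (fubini n)" for n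
  proof -
    have "(\<lambda>x. 2 * (real x ^ n / 2 ^ (x + 1))) sums (2 * real (fubini n))"
      by (intro sums_mult fubini_sums)
    moreover have "(\<lambda>x. 2 * (real x ^ n / 2 ^ (x + 1))) = (\<lambda>m. real m ^ n * (1/2::real) ^ m)"
      by (rule ext) (simp add: power_divide)
    ultimately show ?thesis by (simp add: sums_iff)
  qed
  have Etail: "(\<Sum>m. real m ^ n * (1/2::real) ^ m) = (\<Sum>m<k+1. real m ^ n * (1/2) ^ m) + (\<Sum>m. real m ^ n * e m)" for n
  proof -
    have "(\<Sum>m. real m ^ n * (1/2::real) ^ m) = (\<Sum>m. real (m + (k+1)) ^ n * (1/2) ^ (m + (k+1))) + (\<Sum>m<k+1. real m ^ n * (1/2) ^ m)"
      by (rule suminf_split_initial_segment[OF geo_summable])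
    moreover have "(\<Sum>m. real m ^ n * e m) = (\<Sum>m. real (m + (k+1)) ^ n * e (m + (k+1))) + (\<Sum>m<k+1. real m ^ n * e m)"
      by (rule suminf_split_initial_segment[OF es])
    moreover have "(\<Sum>m<k+1. real m ^ n * e m) = 0" unfolding e_def by (intro sum.neutral) auto
    moreover have "(\<lambda>m. real (m + (k+1)) ^ n * e (m + (k+1))) = (\<lambda>m. real (m + (k+1)) ^ n * (1/2) ^ (m + (k+1)))"
      unfolding e_def by (rule ext) (simp add: power_divide)
    ultimately show ?thesis by simp
  qed
  have head: "(\<Sum>m<k+1. real m ^ n * (1/2::real) ^ m) = 0 ^ n + (\<Sum>i\<in>?I. real i ^ n * ?w i)" for n
    by (simp add: sum.lessThan_Suc_shift sum.atLeast1_atMost_eq power_divide del: sum.lessThan_Suc)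
  have fub0: "fubini 0 = 1" unfolding fubini_def by simp
  have M0: "?M 0 = 1"
  proof -
    have "?M 0 = (\<Sum>m. e m) + (1 - 1 / 2 ^ k) * ?M 0"
      using ident[of 0] by (simp add: sum_distrib_right[symmetric] geo_fin geo_fin' geo_fin_c geo_fin_c')
    moreover have "(\<Sum>m. e m) = 1 / 2 ^ k"
      using Etail[of 0] head[of 0] geo2[of 0] by (simp add: fub0 geo_fin geo_fin' geo_fin_c geo_fin_c')
    ultimately have "?M 0 / 2 ^ k = 1 / 2 ^ k" by (simp add: algebra_simps)
    thus ?thesis by (simp add: divide_cancel_right)
  qed
  define R where "R i = (\<Sum>j=1..n-1. real (n choose j) * real i ^ (n - j) * ?M j)" for i
  have "?M n = (\<Sum>m. real m ^ n * e m) + (\<Sum>i\<in>?I. ?w i * (real i ^ n + R i + ?M n))"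
  proof -
    have S: "(\<Sum>j\<le>n. real (n choose j) * real i ^ (n - j) * ?M j) = real i ^ n + R i + ?M n" for i
      unfolding R_def by (subst sum_split_ends[OF assms(2)]) (simp add: M0)
    show ?thesis using ident[of n] by (simp only: S)
  qed
  also have "(\<Sum>i\<in>?I. ?w i * (real i ^ n + R i + ?M n)) =
             (\<Sum>i\<in>?I. real i ^ n * ?w i) + (\<Sum>i\<in>?I. ?w i * R i) + (1 - 1 / 2 ^ k) * ?M n"
    by (simp add: algebra_simps sum.distrib sum_distrib_right[symmetric] geo_fin geo_fin' geo_fin_c geo_fin_c')
  finally have "?M n = ((\<Sum>m. real m ^ n * e m) + (\<Sum>i\<in>?I. real i ^ n * ?w i)) + (\<Sum>i\<in>?I. ?w i * R i) + (1 - 1 / 2 ^ k) * ?M n"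
    by simp
  also have "(\<Sum>m. real m ^ n * e m) + (\<Sum>i\<in>?I. real i ^ n * ?w i) = 2 * real (fubini n)"
    using Etail[of n] head[of n] geo2[of n] assms(2) by simp
  finally have "?M n / 2 ^ k = 2 * real (fubini n) + (\<Sum>i\<in>?I. ?w i * R i)"
    by (simp add: algebra_simps)
  hence "?M n = 2 ^ k * (2 * real (fubini n) + (\<Sum>i\<in>?I. ?w i * R i))"
    by (simp add: field_simps)
  also have "\<dots> = 2 ^ (k + 1) * real (fubini n) + (\<Sum>i\<in>?I. 2 ^ (k - i) * R i)"
  proof -
    have "(\<Sum>i\<in>?I. 2 ^ k * (?w i * R i)) = (\<Sum>i\<in>?I. 2 ^ (k - i) * R i)"
    proof (rule sum.cong[OF refl])
      fix i assume "i \<in> ?I"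
      hence "(2::real) ^ (k - i) = 2 ^ k / 2 ^ i" by (simp add: power_diff)
      thus "2 ^ k * (?w i * R i) = 2 ^ (k - i) * R i" by simp
    qed
    thus ?thesis by (simp add: sum_distrib_left algebra_simps)
  qed
  also have "(\<Sum>i\<in>?I. 2 ^ (k - i) * R i) =
             (\<Sum>j = 1..n - 1. real (n choose j) * ?M j * (\<Sum>i = 1..k. real i ^ (n - j) * 2 ^ (k - i)))"
  proof -
    have "(\<Sum>i\<in>?I. 2 ^ (k - i) * R i) = (\<Sum>i\<in>?I. \<Sum>j = 1..n - 1. 2 ^ (k - i) * (real (n choose j) * real i ^ (n - j) * ?M j))"
      unfolding R_def by (simp add: sum_distrib_left)
    also have "\<dots> = (\<Sum>j = 1..n - 1. \<Sum>i\<in>?I. 2 ^ (k - i) * (real (n choose j) * real i ^ (n - j) * ?M j))"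
      by (rule sum.swap)
    also have "\<dots> = (\<Sum>j = 1..n - 1. real (n choose j) * ?M j * (\<Sum>i = 1..k. real i ^ (n - j) * 2 ^ (k - i)))"
      by (rule sum.cong[OF refl]) (simp add: sum_distrib_left mult_ac)
    finally show ?thesis .
  qed
  finally show ?thesis .
qed


end
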